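(* Let $K$ be a field, $S=K[t_1,\ldots,t_s]$, and let $\mathbb{X}$ be a finite subset of the projective space $\mathbb{P}^{s-1}$ over $K$ with $|\mathbb{X}|\geq 2$. Then $\delta_{\mathbb{X}}(d)=\delta_{I(\mathbb{X})}(d)\geq 1$ for all $d\geq 1$.
   Context: $S$ has the standard grading, $S_d$ is its degree $d$ part. $I(\mathbb{X})$ is the vanishing ideal of $\mathbb{X}$: the ideal generated by all homogeneous polynomials vanishing at all points of $\mathbb{X}$. For homogeneous $f$, $V_{\mathbb{X}}(f)$ is the set of points of $\mathbb{X}$ at which $f$ vanishes. $\delta_{\mathbb{X}}(d)$ is the minimum distance of the projective Reed–Muller-type code $C_{\mathbb{X}}(d)$, i.e. $\delta_{\mathbb{X}}(d)=\min\{|\mathbb{X}|-|V_{\mathbb{X}}(f)|: f\in S_d,\ f\notin I(\mathbb{X})\}$ (the minimum number of points of $\mathbb{X}$ at which a degree-$d$ form not vanishing on all of $\mathbb{X}$ is nonzero). For a nonzero graded ideal $I$ with Hilbert function $H_I(d)=\dim_K(S_d/I_d)$ and $k=\dim(S/I)$, $\deg(S/I)=(k-1)!\lim_{d\to\infty}H_I(d)/d^{k-1}$ if $k\geq1$ and $\dim_K(S/I)$ if $k=0$. With $\mathcal{F}_d=\{f\in S_d: f\notin I,\ (I\colon f)\neq I\}$, the minimum distance function is $\delta_I(d)=\deg(S/I)-\max\{\deg(S/(I,f)): f\in\mathcal{F}_d\}$ if $\mathcal{F}_d\neq\emptyset$ and $\delta_I(d)=\deg(S/I)$ otherwise. *)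

theory Defs
  imports "HOL-Analysis.Analysis" "HOL-Library.Poly_Mapping"
begin

text \<open>Polynomial ring S = K[t_i : i in 'n] over a field K = 'a, with 'n a finite type of
  s = CARD('n) variables; a polynomial is a finitely supported map from monomials
  (exponent vectors 'n =>0 nat) to coefficients.\<close>

type_synonym ('n, 'a) mpoly = "('n \<Rightarrow>\<^sub>0 nat) \<Rightarrow>\<^sub>0 'a"

definition mon_deg :: "('n::finite \<Rightarrow>\<^sub>0 nat) \<Rightarrow> nat" where
  "mon_deg m = (\<Sum>i\<in>UNIV. Poly_Mapping.lookup m i)"

definition homogeneous :: "nat \<Rightarrow> ('n::finite, 'a::zero) mpoly \<Rightarrow> bool" where
  "homogeneous d f \<longleftrightarrow> (\<forall>m\<in>Poly_Mapping.keys f. mon_deg m = d)"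

definition S_deg :: "nat \<Rightarrow> ('n::finite, 'a::zero) mpoly set" where
  "S_deg d = {f. homogeneous d f}"

definition hcomp :: "nat \<Rightarrow> ('n::finite, 'a::zero) mpoly \<Rightarrow> ('n, 'a) mpoly" where
  "hcomp d f = Abs_poly_mapping (\<lambda>m. if mon_deg m = d then Poly_Mapping.lookup f m else 0)"

definition pscale :: "'a::field \<Rightarrow> ('n, 'a) mpoly \<Rightarrow> ('n, 'a) mpoly" where
  "pscale c p = Poly_Mapping.single 0 c * p"

definition kdim :: "('n, 'a::field) mpoly set \<Rightarrow> nat" where
  "kdim V = vector_space.dim pscale V"

definition peval :: "('n::finite, 'a::field) mpoly \<Rightarrow> ('n \<Rightarrow> 'a) \<Rightarrow> 'a" where
  "peval f x = (\<Sum>m\<in>Poly_Mapping.keys f. Poly_Mapping.lookup f m * (\<Prod>i\<in>UNIV. x i ^ Poly_Mapping.lookup m i))"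

definition is_ideal :: "'r::comm_ring_1 set \<Rightarrow> bool" where
  "is_ideal I \<longleftrightarrow> 0 \<in> I \<and> (\<forall>a\<in>I. \<forall>b\<in>I. a + b \<in> I) \<and> (\<forall>a\<in>I. \<forall>r. r * a \<in> I)"

definition ideal_gen :: "'r::comm_ring_1 set \<Rightarrow> 'r set" where
  "ideal_gen A = \<Inter>{J. is_ideal J \<and> A \<subseteq> J}"

definition prime_ideal :: "'r::comm_ring_1 set \<Rightarrow> bool" where
  "prime_ideal P \<longleftrightarrow> is_ideal P \<and> P \<noteq> UNIV \<and> (\<forall>a b. a * b \<in> P \<longrightarrow> a \<in> P \<or> b \<in> P)"

definition graded_ideal :: "('n::finite, 'a::field) mpoly set \<Rightarrow> bool" where
  "graded_ideal I \<longleftrightarrow> is_ideal I \<and> (\<forall>f\<in>I. \<forall>d. hcomp d f \<in> I)"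

definition colon :: "'r::comm_ring_1 set \<Rightarrow> 'r \<Rightarrow> 'r set" where
  "colon I f = {g. g * f \<in> I}"

definition hilbert_fun :: "('n::finite, 'a::field) mpoly set \<Rightarrow> nat \<Rightarrow> nat" where
  "hilbert_fun I d = kdim (S_deg d :: ('n, 'a) mpoly set) - kdim (I \<inter> S_deg d)"

text \<open>Krull dimension of S/I: supremum of lengths k of chains P_0 < ... < P_k of
  prime ideals of S containing I.\<close>
definition krull_dim :: "('n::finite, 'a::field) mpoly set \<Rightarrow> nat" where
  "krull_dim I = Sup {k. \<exists>P :: nat \<Rightarrow> ('n, 'a) mpoly set.
      (\<forall>i\<le>k. prime_ideal (P i) \<and> I \<subseteq> P i) \<and> (\<forall>i<k. P i \<subset> P (Suc i))}"

text \<open>Degree (multiplicity) of S/I.  For k = 0, dim_K(S/I) = sum of H_I(d) over all d.\<close>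
definition deg_quot :: "('n::finite, 'a::field) mpoly set \<Rightarrow> real" where
  "deg_quot I = (let k = krull_dim I in
     if k \<ge> 1 then fact (k - 1) * lim (\<lambda>d. real (hilbert_fun I d) / real d ^ (k - 1))
     else suminf (\<lambda>d. real (hilbert_fun I d)))"

definition F_set :: "('n::finite, 'a::field) mpoly set \<Rightarrow> nat \<Rightarrow> ('n, 'a) mpoly set" where
  "F_set I d = {f \<in> S_deg d. f \<notin> I \<and> colon I f \<noteq> I}"

definition delta_I :: "('n::finite, 'a::field) mpoly set \<Rightarrow> nat \<Rightarrow> real" where
  "delta_I I d = (if F_set I d \<noteq> {}
     then deg_quot I - Max ((\<lambda>f. deg_quot (ideal_gen (insert f I))) ` F_set I d)
     else deg_quot I)"

definition proj_point :: "('n \<Rightarrow> 'a::field) \<Rightarrow> ('n \<Rightarrow> 'a) set" where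
  "proj_point x = {y. \<exists>c. c \<noteq> 0 \<and> y = (\<lambda>i. c * x i)}"

definition proj_space :: "('n \<Rightarrow> 'a::field) set set" where
  "proj_space = {proj_point x | x. x \<noteq> (\<lambda>_. 0)}"

text \<open>A form f vanishes at a projective point P (i.e. at a, equivalently every, representative).\<close>
definition vanishes_at :: "('n::finite, 'a::field) mpoly \<Rightarrow> ('n \<Rightarrow> 'a) set \<Rightarrow> bool" where
  "vanishes_at f P \<longleftrightarrow> (\<forall>x\<in>P. peval f x = 0)"

definition vanishing_ideal :: "('n::finite \<Rightarrow> 'a::field) set set \<Rightarrow> ('n, 'a) mpoly set" where
  "vanishing_ideal X = ideal_gen {f. (\<exists>d. homogeneous d f) \<and> (\<forall>P\<in>X. vanishes_at f P)}"

definition V_X :: "('n::finite \<Rightarrow> 'a::field) set set \<Rightarrow> ('n, 'a) mpoly \<Rightarrow> ('n \<Rightarrow> 'a) set set" where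
  "V_X X f = {P \<in> X. vanishes_at f P}"

definition delta_X :: "('n::finite \<Rightarrow> 'a::field) set set \<Rightarrow> nat \<Rightarrow> nat" where
  "delta_X X d = Min {card X - card (V_X X f) | f :: ('n, 'a) mpoly.
      f \<in> S_deg d \<and> f \<notin> vanishing_ideal X}"

end

theory Submission
  imports Defs "HOL-Computational_Algebra.Polynomial"
begin


lemma mpoly_expand:
  fixes f :: "'k \<Rightarrow>\<^sub>0 'b::comm_monoid_add"
  shows "f = (\<Sum>m\<in>Poly_Mapping.keys f. Poly_Mapping.single m (Poly_Mapping.lookup f m))"
  by (rule poly_mapping_eqI)
     (auto simp: lookup_sum lookup_single when_def in_keys_iff sum.delta cong: sum.cong)

definition geval :: "('a::zero \<Rightarrow> 'b::comm_ring_1) \<Rightarrow> (('n \<Rightarrow>\<^sub>0 nat) \<Rightarrow> 'b) \<Rightarrow> ('n, 'a) mpoly \<Rightarrow> 'b" where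
  "geval c \<phi> f = (\<Sum>m\<in>Poly_Mapping.keys f. c (Poly_Mapping.lookup f m) * \<phi> m)"

locale evhom =
  fixes c :: "'a::comm_ring_1 \<Rightarrow> 'b::comm_ring_1" and \<phi> :: "('n \<Rightarrow>\<^sub>0 nat) \<Rightarrow> 'b"
  assumes c0: "c 0 = 0" and c1: "c 1 = 1" and cadd: "c (a + b) = c a + c b"
    and cmult: "c (a * b) = c a * c b"
    and \<phi>0: "\<phi> 0 = 1" and \<phi>add: "\<phi> (m + n) = \<phi> m * \<phi> n"
begin

lemma geval_superset:
  assumes "finite A" "Poly_Mapping.keys f \<subseteq> A"
  shows "geval c \<phi> f = (\<Sum>m\<in>A. c (Poly_Mapping.lookup f m) * \<phi> m)"
  unfolding geval_def
  by (rule sum.mono_neutral_left) (use assms in \<open>auto simp: in_keys_iff c0\<close>)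

lemma geval_add: "geval c \<phi> (f + g) = geval c \<phi> f + geval c \<phi> g"
  unfolding geval_def
  by (rule setsum_keys_plus_distrib) (auto simp: c0 cadd algebra_simps)

lemma geval_zero [simp]: "geval c \<phi> 0 = 0"
  by (simp add: geval_def)

lemma geval_single [simp]: "geval c \<phi> (Poly_Mapping.single m a) = c a * \<phi> m"
  by (simp add: geval_def c0)

lemma geval_sum: "geval c \<phi> (sum F A) = (\<Sum>x\<in>A. geval c \<phi> (F x))"
  by (induction A rule: infinite_finite_induct) (auto simp: geval_add)

lemma geval_uminus: "geval c \<phi> (- f) = - geval c \<phi> f"
  using geval_add[of f "-f"] by (metis add.commute eq_neg_iff_add_eq_0 add.right_inverse geval_zero)

lemma geval_diff: "geval c \<phi> (f - g) = geval c \<phi> f - geval c \<phi> g"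
  using geval_add[of f "-g"] by (simp add: geval_uminus)

lemma geval_single_mult:
  "geval c \<phi> (Poly_Mapping.single a x * g) = c x * \<phi> a * geval c \<phi> g"
proof -
  have "Poly_Mapping.single a x * g =
      (\<Sum>m\<in>Poly_Mapping.keys g. Poly_Mapping.single a x * Poly_Mapping.single m (Poly_Mapping.lookup g m))"
    by (subst mpoly_expand[of g]) (simp add: sum_distrib_left)
  also have "\<dots> = (\<Sum>m\<in>Poly_Mapping.keys g. Poly_Mapping.single (a + m) (x * Poly_Mapping.lookup g m))"
    by (simp add: mult_single)
  finally have "geval c \<phi> (Poly_Mapping.single a x * g)
     = (\<Sum>m\<in>Poly_Mapping.keys g. c x * \<phi> a * (c (Poly_Mapping.lookup g m) * \<phi> m))"
    by (simp add: geval_sum cmult \<phi>add mult_ac)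
  thus ?thesis by (simp add: geval_def sum_distrib_left)
qed

lemma geval_mult: "geval c \<phi> (f * g) = geval c \<phi> f * geval c \<phi> g"
proof -
  have "f * g = (\<Sum>m\<in>Poly_Mapping.keys f. Poly_Mapping.single m (Poly_Mapping.lookup f m) * g)"
    by (subst mpoly_expand[of f]) (simp add: sum_distrib_right)
  hence "geval c \<phi> (f * g) = (\<Sum>m\<in>Poly_Mapping.keys f. c (Poly_Mapping.lookup f m) * \<phi> m * geval c \<phi> g)"
    by (simp add: geval_sum geval_single_mult)
  thus ?thesis by (simp add: geval_def sum_distrib_right)
qed

lemma geval_one [simp]: "geval c \<phi> 1 = 1"
  using geval_single[of 0 1] by (simp add: c1 \<phi>0 del: geval_single)

lemma geval_prod: "geval c \<phi> (prod F A) = (\<Prod>x\<in>A. geval c \<phi> (F x))"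
  by (induction A rule: infinite_finite_induct) (auto simp: geval_mult)

lemma geval_power: "geval c \<phi> (f ^ k) = geval c \<phi> f ^ k"
  by (induction k) (auto simp: geval_mult)

end

definition mono_val :: "('n::finite \<Rightarrow> 'a::comm_ring_1) \<Rightarrow> ('n \<Rightarrow>\<^sub>0 nat) \<Rightarrow> 'a" where
  "mono_val x m = (\<Prod>i\<in>UNIV. x i ^ Poly_Mapping.lookup m i)"

lemma mono_val_add: "mono_val x (m + n) = mono_val x m * mono_val x n"
  by (simp add: mono_val_def lookup_add power_add prod.distrib)

lemma mono_val_0 [simp]: "mono_val x 0 = 1"
  by (simp add: mono_val_def)

lemma peval_geval: "peval f x = geval id (mono_val x) f"
  by (simp add: peval_def geval_def mono_val_def)

interpretation pev: evhom id "mono_val x"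
  by unfold_locales (auto simp: mono_val_add)


lemma mon_deg_add: "mon_deg (m + n) = mon_deg m + mon_deg n"
  by (simp add: mon_deg_def lookup_add sum.distrib)

lemma mon_deg_0 [simp]: "mon_deg 0 = 0"
  by (simp add: mon_deg_def)

lemma mon_deg_single [simp]: "mon_deg (Poly_Mapping.single (i::'n::finite) k) = k"
  by (simp add: mon_deg_def lookup_single when_def)

lemma homogeneous_0 [simp]: "homogeneous d 0"
  by (simp add: homogeneous_def)

lemma homogeneous_single: "homogeneous (mon_deg m) (Poly_Mapping.single m a)"
  by (simp add: homogeneous_def)

lemma homogeneous_single': "mon_deg m = d \<Longrightarrow> homogeneous d (Poly_Mapping.single m a)"
  by (simp add: homogeneous_def)

lemma homogeneous_add: "homogeneous d f \<Longrightarrow> homogeneous d g \<Longrightarrow> homogeneous d (f + g)"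
  unfolding homogeneous_def using keys_add[of f g] by blast

lemma homogeneous_uminus: "homogeneous d (f::('n::finite,'a::ab_group_add) mpoly) \<Longrightarrow> homogeneous d (- f)"
  unfolding homogeneous_def by (simp add: keys_minus)

lemma homogeneous_diff: "homogeneous d (f::('n::finite,'a::ab_group_add) mpoly) \<Longrightarrow> homogeneous d g \<Longrightarrow> homogeneous d (f - g)"
  using homogeneous_add[of d f "-g"] homogeneous_uminus[of d g] by simp

lemma homogeneous_sum: "(\<And>x. x \<in> A \<Longrightarrow> homogeneous d (F x)) \<Longrightarrow> homogeneous d (sum F A)"
  by (induction A rule: infinite_finite_induct) (auto intro: homogeneous_add)

lemma homogeneous_mult: "homogeneous d f \<Longrightarrow> homogeneous e (g::('n::finite,'a::comm_semiring_0) mpoly) \<Longrightarrow> homogeneous (d + e) (f * g)"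
  unfolding homogeneous_def using keys_mult[of f g] by (force simp: mon_deg_add)

lemma homogeneous_1 [simp]: "homogeneous 0 (1::('n::finite,'a::comm_semiring_1) mpoly)"
  by (simp add: homogeneous_def)

lemma homogeneous_prod: "(\<And>x. x \<in> A \<Longrightarrow> homogeneous (D x) ((F x)::('n::finite,'a::comm_semiring_1) mpoly))
   \<Longrightarrow> homogeneous (sum D A) (prod F A)"
  by (induction A rule: infinite_finite_induct) (auto intro: homogeneous_mult)

lemma homogeneous_power: "homogeneous d (f::('n::finite,'a::comm_semiring_1) mpoly) \<Longrightarrow> homogeneous (k * d) (f ^ k)"
  by (induction k) (auto dest: homogeneous_mult)

lemma pscale_homogeneous: "homogeneous d f \<Longrightarrow> homogeneous d (pscale a (f::('n::finite,'a::field) mpoly))"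
  unfolding pscale_def using homogeneous_mult[OF homogeneous_single[of 0 a], of d f] by simp

lemma S_deg_iff [simp]: "f \<in> S_deg d \<longleftrightarrow> homogeneous d f"
  by (simp add: S_deg_def)

lemma lookup_hcomp: "Poly_Mapping.lookup (hcomp d f) m = (if mon_deg m = d then Poly_Mapping.lookup f m else 0)"
proof -
  have "finite {m. (if mon_deg m = d then Poly_Mapping.lookup f m else 0) \<noteq> 0}"
    by (rule finite_subset[of _ "Poly_Mapping.keys f"]) (auto simp: in_keys_iff)
  thus ?thesis by (simp add: hcomp_def)
qed

lemma keys_hcomp: "Poly_Mapping.keys (hcomp d f) = {m \<in> Poly_Mapping.keys f. mon_deg m = d}"
  by (auto simp: in_keys_iff lookup_hcomp split: if_splits)

lemma homogeneous_hcomp: "homogeneous d (hcomp d f)"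
  by (simp add: homogeneous_def keys_hcomp)

lemma hcomp_homogeneous: "homogeneous d f \<Longrightarrow> hcomp e f = (if e = d then f else 0)"
  by (rule poly_mapping_eqI) (auto simp: lookup_hcomp homogeneous_def in_keys_iff)

lemma sum_hcomp:
  assumes "\<forall>m\<in>Poly_Mapping.keys f. mon_deg m \<le> N"
  shows "f = (\<Sum>e\<le>N. hcomp e f)"
proof (rule poly_mapping_eqI)
  fix m
  have "(\<Sum>e\<le>N. Poly_Mapping.lookup (hcomp e f) m) = (\<Sum>e\<le>N. if e = mon_deg m then Poly_Mapping.lookup f m else 0)"
    by (rule sum.cong) (auto simp: lookup_hcomp)
  also have "\<dots> = Poly_Mapping.lookup f m"
    using assms by (auto simp: in_keys_iff)
  finally show "Poly_Mapping.lookup f m = Poly_Mapping.lookup (\<Sum>e\<le>N. hcomp e f) m"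
    by (simp add: lookup_sum)
qed

lemma exists_deg_bound: "\<exists>N. \<forall>m\<in>Poly_Mapping.keys f. mon_deg m \<le> N"
  by (rule exI[of _ "Max (mon_deg ` Poly_Mapping.keys f)"]) auto

lemma peval_homogeneous_scale:
  assumes "homogeneous d f"
  shows "peval f (\<lambda>i. a * x i) = a ^ d * peval f x"
proof -
  have "mono_val (\<lambda>i. a * x i) m = a ^ mon_deg m * mono_val x m" for m
    by (simp add: mono_val_def mon_deg_def power_mult_distrib prod.distrib power_sum)
  thus ?thesis using assms
    by (simp add: peval_def homogeneous_def sum_distrib_left mono_val_def[symmetric] mult_ac cong: sum.cong)
qed

lemma peval_add: "peval (f + g) x = peval f x + peval g x"
  by (simp add: peval_geval pev.geval_add)
lemma peval_mult: "peval (f * g) x = peval f x * peval g x"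
  by (simp add: peval_geval pev.geval_mult)
lemma peval_diff: "peval (f - g) x = peval f x - peval g x"
  by (simp add: peval_geval pev.geval_diff)
lemma peval_sum: "peval (sum F A) x = (\<Sum>a\<in>A. peval (F a) x)"
  by (simp add: peval_geval pev.geval_sum)
lemma peval_prod: "peval (prod F A) x = (\<Prod>a\<in>A. peval (F a) x)"
  by (simp add: peval_geval pev.geval_prod)
lemma peval_power: "peval (f ^ k) x = peval f x ^ k"
  by (simp add: peval_geval pev.geval_power)
lemma peval_single: "peval (Poly_Mapping.single m a) x = a * mono_val x m"
  by (simp add: peval_geval)
lemma peval_zero [simp]: "peval 0 x = 0"
  by (simp add: peval_geval)
lemma peval_pscale: "peval (pscale a f) x = a * peval f x"
  by (simp add: peval_geval pscale_def pev.geval_single_mult)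

lemma pscale_add: "pscale a (f + g) = pscale a f + pscale a g"
  by (simp add: pscale_def distrib_left)

interpretation PV: vector_space "pscale :: 'a::field \<Rightarrow> ('n, 'a) mpoly \<Rightarrow> _"
  by unfold_locales (simp_all add: pscale_def distrib_left distrib_right single_add mult_single mult.assoc[symmetric])

lemma kdim_PV: "kdim V = PV.dim V"
  by (simp add: kdim_def)


definition psi :: "('n::finite \<Rightarrow> 'a::field) \<Rightarrow> ('n, 'a) mpoly \<Rightarrow> 'a poly" where
  "psi x = geval (\<lambda>a. [:a:]) (\<lambda>m. monom (mono_val x m) (mon_deg m))"

interpretation PS: evhom "\<lambda>a. [:a:]" "\<lambda>m. monom (mono_val x m) (mon_deg m)"
  by unfold_locales (auto simp: mono_val_add mon_deg_add mult_monom monom_eq_1 one_pCons)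

lemma psi_add: "psi x (f + g) = psi x f + psi x g" by (simp add: psi_def PS.geval_add)
lemma psi_mult: "psi x (f * g) = psi x f * psi x g" by (simp add: psi_def PS.geval_mult)
lemma psi_diff: "psi x (f - g) = psi x f - psi x g" by (simp add: psi_def PS.geval_diff)
lemma psi_sum: "psi x (sum F A) = (\<Sum>a\<in>A. psi x (F a))" by (simp add: psi_def PS.geval_sum)
lemma psi_one [simp]: "psi x 1 = 1" by (simp add: psi_def)
lemma psi_zero [simp]: "psi x 0 = 0" by (simp add: psi_def)
lemma psi_single: "psi x (Poly_Mapping.single m a) = monom (a * mono_val x m) (mon_deg m)"
  by (simp add: psi_def smult_monom)

lemma coeff_psi: "coeff (psi x f) e = peval (hcomp e f) x"
proof -
  have "coeff (psi x f) e = (\<Sum>m\<in>Poly_Mapping.keys f.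
      (if mon_deg m = e then Poly_Mapping.lookup f m * mono_val x m else 0))"
    unfolding psi_def geval_def by (auto simp: coeff_sum coeff_monom intro!: sum.cong)
  also have "\<dots> = (\<Sum>m\<in>{m \<in> Poly_Mapping.keys f. mon_deg m = e}. Poly_Mapping.lookup f m * mono_val x m)"
    by (simp add: sum.inter_filter)
  also have "\<dots> = peval (hcomp e f) x"
    by (simp add: peval_def keys_hcomp lookup_hcomp mono_val_def)
  finally show ?thesis .
qed

lemma psi_homogeneous: "homogeneous d f \<Longrightarrow> psi x f = monom (peval f x) d"
  by (rule poly_eqI) (auto simp: coeff_psi hcomp_homogeneous coeff_monom)

lemma psi_eq_0_iff: "psi x f = 0 \<longleftrightarrow> (\<forall>e. peval (hcomp e f) x = 0)"
  by (auto simp: poly_eq_iff coeff_psi)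

lemma ideal_gen_ideal: "is_ideal (ideal_gen A)"
  by (auto simp: ideal_gen_def is_ideal_def)

lemma ideal_gen_sub: "A \<subseteq> ideal_gen A"
  by (auto simp: ideal_gen_def)

lemma ideal_gen_least: "is_ideal J \<Longrightarrow> A \<subseteq> J \<Longrightarrow> ideal_gen A \<subseteq> J"
  by (auto simp: ideal_gen_def)

lemma ideal_add: "is_ideal I \<Longrightarrow> a \<in> I \<Longrightarrow> b \<in> I \<Longrightarrow> a + b \<in> I"
  by (auto simp: is_ideal_def)
lemma ideal_mult: "is_ideal I \<Longrightarrow> a \<in> I \<Longrightarrow> r * a \<in> I"
  by (auto simp: is_ideal_def)
lemma ideal_mult2: "is_ideal I \<Longrightarrow> a \<in> I \<Longrightarrow> a * r \<in> I"
  by (auto simp: is_ideal_def mult.commute)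
lemma ideal_0: "is_ideal I \<Longrightarrow> 0 \<in> I"
  by (auto simp: is_ideal_def)
lemma ideal_uminus: "is_ideal I \<Longrightarrow> a \<in> I \<Longrightarrow> - a \<in> I"
  using ideal_mult[of I a "-1"] by simp
lemma ideal_diff: "is_ideal I \<Longrightarrow> a \<in> I \<Longrightarrow> b \<in> I \<Longrightarrow> a - b \<in> I"
  using ideal_add[of I a "-b"] ideal_uminus[of I b] by simp
lemma ideal_sum: "is_ideal I \<Longrightarrow> (\<And>x. x \<in> A \<Longrightarrow> F x \<in> I) \<Longrightarrow> sum F A \<in> I"
  by (induction A rule: infinite_finite_induct) (auto intro: ideal_add ideal_0)

lemma ideal_gen_mono: "A \<subseteq> B \<Longrightarrow> ideal_gen A \<subseteq> ideal_gen B"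
  by (auto simp: ideal_gen_def)

lemma ideal_Inter: "(\<And>J. J \<in> \<J> \<Longrightarrow> is_ideal J) \<Longrightarrow> is_ideal (\<Inter>\<J>)"
  by (auto simp: is_ideal_def)

lemma kernel_ideal:
  assumes "evhom c \<phi>"
  shows "is_ideal {g. geval c \<phi> g = 0}"
proof -
  interpret evhom c \<phi> by fact
  show ?thesis by (auto simp: is_ideal_def geval_add geval_mult)
qed

lemma psi_kernel_ideal: "is_ideal {g. psi x g = 0}"
  by (auto simp: is_ideal_def psi_add psi_mult)

definition rp :: "('n \<Rightarrow> 'a::field) set \<Rightarrow> ('n \<Rightarrow> 'a)" where
  "rp P = (SOME x. x \<noteq> (\<lambda>_. 0) \<and> P = proj_point x)"

lemma rp:
  assumes "P \<in> proj_space"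
  shows "rp P \<noteq> (\<lambda>_. 0)" "P = proj_point (rp P)"
proof -
  have "\<exists>x. x \<noteq> (\<lambda>_. 0) \<and> P = proj_point x" using assms by (auto simp: proj_space_def)
  hence "rp P \<noteq> (\<lambda>_. 0) \<and> P = proj_point (rp P)" unfolding rp_def by (rule someI_ex)
  thus "rp P \<noteq> (\<lambda>_. 0)" "P = proj_point (rp P)" by auto
qed

lemma mem_proj_point_rp:
  assumes "P \<in> proj_space"
  shows "y \<in> P \<longleftrightarrow> (\<exists>a. a \<noteq> 0 \<and> y = (\<lambda>i. a * rp P i))"
proof -
  have "y \<in> P \<longleftrightarrow> y \<in> proj_point (rp P)" using rp(2)[OF assms] by (rule arg_cong)
  thus ?thesis by (simp add: proj_point_def)
qed

lemma rp_mem: "P \<in> proj_space \<Longrightarrow> rp P \<in> P"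
  by (subst mem_proj_point_rp) (auto intro!: exI[of _ 1])

lemma vanishes_at_homog:
  assumes "P \<in> proj_space" "homogeneous d f"
  shows "vanishes_at f P \<longleftrightarrow> peval f (rp P) = 0"
proof
  assume "vanishes_at f P"
  thus "peval f (rp P) = 0" using rp_mem[OF assms(1)] by (auto simp: vanishes_at_def)
next
  assume h: "peval f (rp P) = 0"
  show "vanishes_at f P" unfolding vanishes_at_def
  proof
    fix y assume "y \<in> P"
    then obtain a where "y = (\<lambda>i. a * rp P i)"
      using mem_proj_point_rp[OF assms(1)] by blast
    thus "peval f y = 0" using h assms(2) by (simp add: peval_homogeneous_scale)
  qed
qed

lemma vanishing_ideal_char:
  assumes "X \<subseteq> proj_space"
  shows "vanishing_ideal X = {g. \<forall>P\<in>X. psi (rp P) g = 0}"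
proof
  have "is_ideal (\<Inter>P\<in>X. {g. psi (rp P) g = 0})"
    by (rule ideal_Inter) (auto intro: psi_kernel_ideal)
  moreover have "{f. (\<exists>d. homogeneous d f) \<and> (\<forall>P\<in>X. vanishes_at f P)} \<subseteq> (\<Inter>P\<in>X. {g. psi (rp P) g = 0})"
  proof safe
    fix f d P assume "\<forall>P\<in>X. vanishes_at f P" "homogeneous d f" "P \<in> X"
    thus "psi (rp P) f = 0" using assms vanishes_at_homog[of P d f] by (auto simp: psi_homogeneous)
  qed
  ultimately have "vanishing_ideal X \<subseteq> (\<Inter>P\<in>X. {g. psi (rp P) g = 0})"
    unfolding vanishing_ideal_def by (rule ideal_gen_least)
  thus "vanishing_ideal X \<subseteq> {g. \<forall>P\<in>X. psi (rp P) g = 0}" by blast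
next
  show "{g. \<forall>P\<in>X. psi (rp P) g = 0} \<subseteq> vanishing_ideal X"
  proof safe
    fix g assume g: "\<forall>P\<in>X. psi (rp P) g = 0"
    obtain N where N: "\<forall>m\<in>Poly_Mapping.keys g. mon_deg m \<le> N" using exists_deg_bound by blast
    have "(\<Sum>e\<le>N. hcomp e g) \<in> vanishing_ideal X"
      unfolding vanishing_ideal_def
    proof (rule ideal_sum[OF ideal_gen_ideal])
      fix e
      have "hcomp e g \<in> {f. (\<exists>d. homogeneous d f) \<and> (\<forall>P\<in>X. vanishes_at f P)}"
      proof -
        have "vanishes_at (hcomp e g) P" if "P \<in> X" for P
        proof -
          have "psi (rp P) g = 0" using g that by blast
          hence "peval (hcomp e g) (rp P) = 0" unfolding psi_eq_0_iff by blast
          moreover have "P \<in> proj_space" using assms that by blast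
          ultimately show ?thesis using vanishes_at_homog[OF _ homogeneous_hcomp, of P e g] by blast
        qed
        thus ?thesis using homogeneous_hcomp[of e g] by blast
      qed
      thus "hcomp e g \<in> ideal_gen {f. (\<exists>d. homogeneous d f) \<and> (\<forall>P\<in>X. vanishes_at f P)}"
        by (rule subsetD[OF ideal_gen_sub])
    qed
    thus "g \<in> vanishing_ideal X" by (simp only: sum_hcomp[OF N, symmetric])
  qed
qed

lemma homog_in_vanishing_ideal:
  assumes "X \<subseteq> proj_space" "homogeneous d f"
  shows "f \<in> vanishing_ideal X \<longleftrightarrow> (\<forall>P\<in>X. peval f (rp P) = 0)"
proof -
  have "psi (rp P) f = 0 \<longleftrightarrow> peval f (rp P) = 0" for P
    using psi_homogeneous[OF assms(2), of "rp P"] by simp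
  thus ?thesis unfolding vanishing_ideal_char[OF assms(1)] by simp
qed


definition var :: "'n \<Rightarrow> ('n, 'a::field) mpoly" where
  "var i = Poly_Mapping.single (Poly_Mapping.single i 1) 1"

lemma mono_val_single: "mono_val x (Poly_Mapping.single i k) = x i ^ k"
proof -
  have "mono_val x (Poly_Mapping.single i k) = (\<Prod>j\<in>UNIV. if j = i then x i ^ k else 1)"
    unfolding mono_val_def by (rule prod.cong) (auto simp: lookup_single when_def)
  thus ?thesis by simp
qed

lemma peval_var [simp]: "peval (var i) x = x i"
  by (simp add: var_def peval_single mono_val_single)

lemma homogeneous_var: "homogeneous 1 (var (i::'n::finite))"
  unfolding var_def by (rule homogeneous_single') simp

lemma proj_point_scale:
  fixes x :: "'n \<Rightarrow> 'a::field" and a :: 'a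
  shows "a \<noteq> 0 \<Longrightarrow> proj_point (\<lambda>i. a * x i) = proj_point x"
  unfolding proj_point_def
proof (safe)
  fix c :: 'a assume "a \<noteq> 0" "c \<noteq> 0"
  thus "\<exists>c'. c' \<noteq> 0 \<and> (\<lambda>i. c * (a * x i)) = (\<lambda>i. c' * x i)"
    by (intro exI[of _ "c * a"]) (auto simp: mult.assoc)
next
  fix c :: 'a assume "a \<noteq> 0" "c \<noteq> 0"
  thus "\<exists>c'. c' \<noteq> 0 \<and> (\<lambda>i. c * x i) = (\<lambda>i. c' * (a * x i))"
    by (intro exI[of _ "c / a"]) (auto simp: fun_eq_iff)
qed


lemma separating_linear_form:
  assumes "P \<in> proj_space" "Q \<in> proj_space" "P \<noteq> Q"
  shows "\<exists>l. homogeneous 1 l \<and> peval l (rp Q) = 0 \<and> peval l (rp P) \<noteq> (0::'a::field)"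
proof (rule ccontr)
  assume C: "\<not> ?thesis"
  define y where "y = rp Q"
  define p where "p = rp P"
  have y0: "y \<noteq> (\<lambda>_. 0)" using rp(1)[OF assms(2)] by (simp add: y_def)
  then obtain i where yi: "y i \<noteq> 0" by auto
  have e: "y i * p j - y j * p i = 0" for j
  proof -
    let ?l = "pscale (y i) (var j) - pscale (y j) (var i)"
    have "homogeneous 1 ?l"
      by (intro homogeneous_diff pscale_homogeneous homogeneous_var)
    moreover have "peval ?l y = 0" by (simp add: peval_diff peval_pscale mult.commute)
    ultimately have "peval ?l p = 0" using C by (auto simp: y_def p_def)
    thus ?thesis by (simp add: peval_diff peval_pscale)
  qed
  have pj: "p j = (p i / y i) * y j" for j
  proof -
    have "y i * p j = y j * p i" using e[of j] by simp
    thus ?thesis using yi by (simp add: field_simps)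
  qed
  have "p \<noteq> (\<lambda>_. 0)" using rp(1)[OF assms(1)] by (simp add: p_def)
  have a0: "p i / y i \<noteq> 0"
  proof
    assume "p i / y i = 0"
    hence "p j = 0" for j using pj[of j] by (metis mult_zero_left)
    thus False using \<open>p \<noteq> (\<lambda>_. 0)\<close> by auto
  qed
  have "P = proj_point p" unfolding p_def by (rule rp(2)[OF assms(1)])
  also have "p = (\<lambda>j. (p i / y i) * y j)" by (rule ext) (rule pj)
  also have "proj_point \<dots> = proj_point y" by (rule proj_point_scale[OF a0])
  also have "\<dots> = Q" unfolding y_def by (rule rp(2)[OF assms(2), symmetric])
  finally show False using assms(3) by simp
qed


lemma interpolation:
  assumes X: "X \<subseteq> proj_space" "finite X" and P: "P \<in> X" and D: "D + 1 \<ge> card X"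
  shows "\<exists>h. homogeneous D h \<and> peval h (rp P) = (1::'a::field) \<and> (\<forall>Q\<in>X - {P}. peval h (rp Q) = 0)"
proof -
  have Pp: "P \<in> proj_space" using X P by blast
  define L where "L Q = (SOME l. homogeneous 1 l \<and> peval l (rp Q) = 0 \<and> peval l (rp P) \<noteq> (0::'a))" for Q
  have L: "homogeneous 1 (L Q) \<and> peval (L Q) (rp Q) = 0 \<and> peval (L Q) (rp P) \<noteq> 0" if "Q \<in> X - {P}" for Q
    unfolding L_def by (rule someI_ex, rule separating_linear_form) (use that X Pp in auto)
  obtain i where yi: "rp P i \<noteq> 0" using rp(1)[OF Pp] by auto
  define k where "k = D - card (X - {P})"
  define h0 where "h0 = var i ^ k * (\<Prod>Q\<in>X - {P}. L Q)"
  have cardP: "card (X - {P}) = card X - 1" using X P by simp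
  have "homogeneous (k * 1 + (\<Sum>Q\<in>X - {P}. 1)) h0"
    unfolding h0_def by (intro homogeneous_mult homogeneous_power homogeneous_var homogeneous_prod) (use L in auto)
  moreover have "k * 1 + (\<Sum>Q\<in>X - {P}. 1) = D" using D cardP
    by (simp add: k_def)
  ultimately have hom: "homogeneous D h0" by simp
  have v0: "peval h0 (rp P) \<noteq> 0"
    using L yi X by (simp add: h0_def peval_mult peval_power peval_prod)
  have v1: "peval h0 (rp Q) = 0" if "Q \<in> X - {P}" for Q
  proof -
    have "(\<Prod>Q\<in>X - {P}. peval (L Q) (rp Q')) = 0" if "Q' \<in> X - {P}" for Q'
      using L[OF that] that X by (intro prod_zero) auto
    thus ?thesis using that by (simp add: h0_def peval_mult peval_power peval_prod)
  qed
  show ?thesis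
    by (rule exI[of _ "pscale (1 / peval h0 (rp P)) h0"])
       (use hom v0 v1 in \<open>auto simp: pscale_homogeneous peval_pscale\<close>)
qed


lemma finite_monomials: "finite {m :: 'n::finite \<Rightarrow>\<^sub>0 nat. mon_deg m = D}"
proof -
  have sub: "Poly_Mapping.lookup ` {m :: 'n \<Rightarrow>\<^sub>0 nat. mon_deg m = D} \<subseteq> Pi UNIV (\<lambda>_. {..D})"
  proof
    fix f assume "f \<in> Poly_Mapping.lookup ` {m :: 'n \<Rightarrow>\<^sub>0 nat. mon_deg m = D}"
    then obtain m :: "'n \<Rightarrow>\<^sub>0 nat" where m: "mon_deg m = D" "f = Poly_Mapping.lookup m" by blast
    have "Poly_Mapping.lookup m i \<le> mon_deg m" for i
      unfolding mon_deg_def by (rule member_le_sum) auto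
    thus "f \<in> Pi UNIV (\<lambda>_. {..D})" using m by (auto simp: Pi_def)
  qed
  have "finite (Pi\<^sub>E UNIV (\<lambda>_::'n. {..D}))" by (rule finite_PiE) auto
  hence "finite (Pi UNIV (\<lambda>_::'n. {..D}))" by (simp only: PiE_UNIV_domain)
  hence "finite (Poly_Mapping.lookup ` {m :: 'n \<Rightarrow>\<^sub>0 nat. mon_deg m = D})"
    using sub by (rule finite_subset[rotated])
  moreover have "inj_on Poly_Mapping.lookup {m :: 'n \<Rightarrow>\<^sub>0 nat. mon_deg m = D}"
    by (rule inj_onI) (metis poly_mapping.lookup_inject)
  ultimately show ?thesis by (rule finite_imageD)
qed
lemma pscale_single: "pscale a (Poly_Mapping.single m 1) = Poly_Mapping.single m a"
  by (simp add: pscale_def mult_single)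

lemma S_deg_span:
  "S_deg D \<subseteq> PV.span ((\<lambda>m. Poly_Mapping.single m (1::'a::field)) ` {m :: 'n::finite \<Rightarrow>\<^sub>0 nat. mon_deg m = D})"
proof
  fix g :: "('n, 'a) mpoly" assume "g \<in> S_deg D"
  hence hk: "\<forall>m\<in>Poly_Mapping.keys g. mon_deg m = D" by (simp add: homogeneous_def)
  have "g = (\<Sum>m\<in>Poly_Mapping.keys g. pscale (Poly_Mapping.lookup g m) (Poly_Mapping.single m 1))"
    by (subst mpoly_expand) (simp add: pscale_single)
  also have "\<dots> \<in> PV.span ((\<lambda>m. Poly_Mapping.single m (1::'a)) ` {m. mon_deg m = D})"
    by (intro PV.span_sum PV.span_scale PV.span_base) (use hk in auto)
  finally show "g \<in> PV.span ((\<lambda>m. Poly_Mapping.single m (1::'a)) ` {m. mon_deg m = D})" .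
qed


lemma dim_codim:
  fixes Y :: "('n::finite \<Rightarrow> 'a::field) set" and h :: "('n \<Rightarrow> 'a) \<Rightarrow> ('n, 'a) mpoly"
  assumes Y: "finite Y" and hU: "\<And>y. y \<in> Y \<Longrightarrow> homogeneous D (h y)"
    and hv: "\<And>y y'. y \<in> Y \<Longrightarrow> y' \<in> Y \<Longrightarrow> peval (h y) y' = (if y' = y then 1 else 0)"
  shows "PV.dim (S_deg D :: ('n, 'a) mpoly set) = PV.dim {g \<in> S_deg D. \<forall>y\<in>Y. peval g y = 0} + card Y"
proof -
  define U where "U = (S_deg D :: ('n, 'a) mpoly set)"
  define W where "W = {g \<in> U. \<forall>y\<in>Y. peval g y = 0}"
  define M where "M = (\<lambda>m. Poly_Mapping.single m (1::'a)) ` {m :: 'n \<Rightarrow>\<^sub>0 nat. mon_deg m = D}"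
  have finM: "finite M" unfolding M_def by (intro finite_imageI finite_monomials)
  have UM: "U \<subseteq> PV.span M" unfolding U_def M_def by (rule S_deg_span)
  obtain B where B: "B \<subseteq> W" "PV.independent B" "W \<subseteq> PV.span B"
    using PV.maximal_independent_subset[of W] by blast
  have WU: "W \<subseteq> U" by (auto simp: W_def)
  have finB: "finite B" using PV.independent_span_bound[OF finM B(2)] B(1) WU UM by blast
  define H where "H = h ` Y"
  have injh: "inj_on h Y"
  proof (rule inj_onI)
    fix y y' assume "y \<in> Y" "y' \<in> Y" "h y = h y'"
    hence "peval (h y) y' = peval (h y') y'" by simp
    thus "y = y'" using hv[OF \<open>y \<in> Y\<close> \<open>y' \<in> Y\<close>] hv[OF \<open>y' \<in> Y\<close> \<open>y' \<in> Y\<close>]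
      by (auto split: if_splits)
  qed
  have cardH: "card H = card Y" unfolding H_def by (rule card_image[OF injh])
  have finH: "finite H" unfolding H_def using Y by simp
  have Bv: "peval b y = 0" if "b \<in> B" "y \<in> Y" for b y
    using that B(1) by (auto simp: W_def)
  have BH: "B \<inter> H = {}"
  proof safe
    fix b assume "b \<in> B" "b \<in> H"
    then obtain y where "y \<in> Y" "b = h y" by (auto simp: H_def)
    thus "b \<in> {}" using Bv[OF \<open>b \<in> B\<close> \<open>y \<in> Y\<close>] hv[OF \<open>y \<in> Y\<close> \<open>y \<in> Y\<close>] by simp
  qed
  have HU: "H \<subseteq> U" using hU by (auto simp: H_def U_def)
  have indep: "PV.independent (B \<union> H)"
  proof (rule PV.independent_if_scalars_zero)
    show "finite (B \<union> H)" using finB finH by simp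
  next
    fix f v assume sum0: "(\<Sum>x\<in>B \<union> H. pscale (f x) x) = 0" and v: "v \<in> B \<union> H"
    have sumsplit: "(\<Sum>x\<in>B \<union> H. pscale (f x) x) = (\<Sum>x\<in>B. pscale (f x) x) + (\<Sum>x\<in>H. pscale (f x) x)"
      using finB finH BH by (rule sum.union_disjoint)
    have fH: "f (h y) = 0" if "y \<in> Y" for y
    proof -
      have "0 = peval (\<Sum>x\<in>B \<union> H. pscale (f x) x) y" using sum0 by simp
      also have "\<dots> = (\<Sum>x\<in>B. f x * peval x y) + (\<Sum>x\<in>H. f x * peval x y)"
        by (simp add: sumsplit peval_add peval_sum peval_pscale)
      also have "(\<Sum>x\<in>B. f x * peval x y) = 0" using Bv[OF _ that] by simp
      also have "(\<Sum>x\<in>H. f x * peval x y) = (\<Sum>y'\<in>Y. f (h y') * peval (h y') y)"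
        unfolding H_def by (rule sum.reindex[OF injh, unfolded comp_def])
      also have "\<dots> = (\<Sum>y'\<in>Y. if y' = y then f (h y') else 0)"
        by (rule sum.cong) (use hv that in auto)
      also have "\<dots> = f (h y)" using Y that by simp
      finally show ?thesis by simp
    qed
    have "(\<Sum>x\<in>H. pscale (f x) x) = 0"
      by (rule sum.neutral) (use fH in \<open>auto simp: H_def pscale_def\<close>)
    hence sB: "(\<Sum>x\<in>B. pscale (f x) x) = 0" using sum0 sumsplit by simp
    show "f v = 0"
    proof (cases "v \<in> B")
      case True
      thus ?thesis using B(2) sB finB unfolding PV.independent_explicit_finite_subsets by blast
    next
      case False
      thus ?thesis using v fH by (auto simp: H_def)
    qed
  qed
  have span: "U \<subseteq> PV.span (B \<union> H)"
  proof
    fix g assume g: "g \<in> U"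
    define g' where "g' = g - (\<Sum>y\<in>Y. pscale (peval g y) (h y))"
    have "g' \<in> U" using g hU unfolding g'_def U_def
      by (auto intro!: homogeneous_diff homogeneous_sum pscale_homogeneous)
    moreover have "peval g' y = 0" if "y \<in> Y" for y
    proof -
      have "(\<Sum>y'\<in>Y. peval g y' * peval (h y') y) = (\<Sum>y'\<in>Y. if y' = y then peval g y' else 0)"
        by (rule sum.cong) (use hv that in auto)
      thus ?thesis using Y that by (simp add: g'_def peval_diff peval_sum peval_pscale)
    qed
    ultimately have "g' \<in> W" by (auto simp: W_def)
    hence "g' \<in> PV.span (B \<union> H)" using B(3) PV.span_mono[of B "B \<union> H"] by blast
    moreover have "(\<Sum>y\<in>Y. pscale (peval g y) (h y)) \<in> PV.span (B \<union> H)"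
      by (intro PV.span_sum PV.span_scale PV.span_base) (auto simp: H_def)
    ultimately have "g' + (\<Sum>y\<in>Y. pscale (peval g y) (h y)) \<in> PV.span (B \<union> H)"
      by (rule PV.span_add)
    thus "g \<in> PV.span (B \<union> H)" by (simp add: g'_def)
  qed
  have "PV.dim U = card (B \<union> H)"
    by (rule PV.dim_unique[OF _ span indep refl]) (use B(1) WU HU in auto)
  also have "\<dots> = card B + card Y" using finB finH BH cardH by (simp add: card_Un_disjoint)
  also have "card B = PV.dim W"
    by (rule PV.dim_unique[OF B(1) B(3) B(2) refl, symmetric])
  finally show ?thesis by (simp add: U_def W_def)
qed

lemma hilbert_fun_eq:
  fixes Y :: "('n::finite \<Rightarrow> 'a::field) set" and h :: "('n \<Rightarrow> 'a) \<Rightarrow> ('n, 'a) mpoly"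
    and J :: "('n, 'a) mpoly set"
  assumes Y: "finite Y" and hU: "\<And>y. y \<in> Y \<Longrightarrow> homogeneous D (h y)"
    and hv: "\<And>y y'. y \<in> Y \<Longrightarrow> y' \<in> Y \<Longrightarrow> peval (h y) y' = (if y' = y then 1 else 0)"
    and J: "J \<inter> S_deg D = {g \<in> S_deg D. \<forall>y\<in>Y. peval g y = 0}"
  shows "hilbert_fun J D = card Y"
  using dim_codim[OF Y hU hv] by (simp add: hilbert_fun_def kdim_PV J)


lemma poly_ideal_min_dvd:
  fixes Q :: "'a::field poly set"
  assumes Q: "is_ideal Q" and q: "q \<in> Q" "q \<noteq> 0" and min: "\<forall>q'\<in>Q. q' \<noteq> 0 \<longrightarrow> degree q \<le> degree q'"
    and a: "a \<in> Q"
  shows "q dvd a"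
proof (rule ccontr)
  assume nd: "\<not> q dvd a"
  have "a mod q = a - (a div q) * q" by (simp add: minus_div_mult_eq_mod)
  also have "\<dots> \<in> Q" using Q a q by (intro ideal_diff ideal_mult) auto
  finally have "a mod q \<in> Q" .
  moreover have "a mod q \<noteq> 0" using nd by (simp add: mod_eq_0_iff_dvd)
  moreover have "degree (a mod q) < degree q" using degree_mod_less_degree[OF q(2) nd] .
  ultimately show False using min by force
qed

lemma poly_ideal_min_exists:
  fixes Q :: "'a::field poly set"
  assumes "\<exists>q\<in>Q. q \<noteq> 0"
  shows "\<exists>q\<in>Q. q \<noteq> 0 \<and> (\<forall>q'\<in>Q. q' \<noteq> 0 \<longrightarrow> degree q \<le> degree q')"
proof -
  define n where "n = (LEAST n. \<exists>q\<in>Q. q \<noteq> 0 \<and> degree q = n)"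
  have "\<exists>n. \<exists>q\<in>Q. q \<noteq> 0 \<and> degree q = n" using assms by blast
  hence "\<exists>q\<in>Q. q \<noteq> 0 \<and> degree q = n" unfolding n_def by (rule LeastI_ex)
  then obtain q where q: "q \<in> Q" "q \<noteq> 0" "degree q = n" by blast
  have "\<forall>q'\<in>Q. q' \<noteq> 0 \<longrightarrow> n \<le> degree q'"
    unfolding n_def by (auto intro: Least_le)
  thus ?thesis using q by auto
qed

lemma poly_no_chain:
  fixes Q1 Q2 :: "'a::field poly set"
  assumes I1: "is_ideal Q1" and I2: "is_ideal Q2" and sub: "Q1 \<subseteq> Q2" and one: "1 \<notin> Q2"
    and pr: "\<And>u v. u * v \<in> Q1 \<Longrightarrow> u \<in> Q1 \<or> v \<in> Q1"
    and nz: "\<exists>q\<in>Q1. q \<noteq> 0" and r: "r \<in> Q2" "r \<notin> Q1"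
  shows False
proof -
  obtain q where q: "q \<in> Q1" "q \<noteq> 0" "\<forall>q'\<in>Q1. q' \<noteq> 0 \<longrightarrow> degree q \<le> degree q'"
    using poly_ideal_min_exists[OF nz] by blast
  have "\<exists>s\<in>Q2. s \<noteq> 0" using q sub by blast
  then obtain s where s: "s \<in> Q2" "s \<noteq> 0" "\<forall>q'\<in>Q2. q' \<noteq> 0 \<longrightarrow> degree s \<le> degree q'"
    using poly_ideal_min_exists by blast
  have "s dvd q" using poly_ideal_min_dvd[OF I2 s] q sub by blast
  then obtain k where k: "q = s * k" by (auto elim: dvdE)
  have "s \<in> Q1 \<or> k \<in> Q1" using pr q(1) k by simp
  thus False
  proof
    assume "s \<in> Q1"
    moreover have "s dvd r" using poly_ideal_min_dvd[OF I2 s r(1)] .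
    then obtain t where "r = s * t" by (auto elim: dvdE)
    ultimately have "r \<in> Q1" using I1 by (simp add: ideal_mult2)
    thus False using r by simp
  next
    assume "k \<in> Q1"
    have k0: "k \<noteq> 0" using k q(2) by auto
    hence "degree q \<le> degree k" using q(3) \<open>k \<in> Q1\<close> by blast
    moreover have "degree q = degree s + degree k" using k s(2) k0 by (simp add: degree_mult_eq)
    ultimately have "degree s = 0" by simp
    hence "is_unit s" using s(2) by (simp add: is_unit_iff_degree)
    then obtain t where "1 = s * t" by (auto elim: dvdE)
    hence "1 \<in> Q2" using I2 s(1) by (metis ideal_mult2)
    thus False using one by simp
  qed
qed


lemma prime_ideal_not_one: "prime_ideal P \<Longrightarrow> (1::'r::comm_ring_1) \<notin> P"
  unfolding prime_ideal_def is_ideal_def by (metis UNIV_eq_I mult.right_neutral)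

lemma prime_prod:
  assumes P: "prime_ideal P" and A: "finite A" and pr: "prod F A \<in> P"
  shows "\<exists>a\<in>A. F a \<in> P"
  using A pr
proof (induction A rule: finite_induct)
  case empty thus ?case using prime_ideal_not_one[OF P] by simp
next
  case (insert a A)
  hence "F a * prod F A \<in> P" by simp
  hence "F a \<in> P \<or> prod F A \<in> P" using P by (simp add: prime_ideal_def)
  thus ?case using insert by blast
qed

lemma prime_contains_kernel:
  assumes X: "X \<subseteq> proj_space" "finite X" and P: "prime_ideal P" and I: "vanishing_ideal X \<subseteq> P"
  shows "\<exists>Q\<in>X. {g. psi (rp Q) g = 0} \<subseteq> P"
proof (rule ccontr)
  assume "\<not> ?thesis"
  hence "\<forall>Q\<in>X. \<exists>g. psi (rp Q) g = 0 \<and> g \<notin> P" by blast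
  then obtain G where G: "\<And>Q. Q \<in> X \<Longrightarrow> psi (rp Q) (G Q) = 0 \<and> G Q \<notin> P" by metis
  have "prod G X \<in> vanishing_ideal X"
    unfolding vanishing_ideal_char[OF X(1)]
  proof safe
    fix Q assume "Q \<in> X"
    have "psi (rp Q) (prod G X) = (\<Prod>Q'\<in>X. psi (rp Q) (G Q'))"
      by (simp add: psi_def PS.geval_prod)
    also have "\<dots> = 0" using G[OF \<open>Q \<in> X\<close>] \<open>Q \<in> X\<close> X(2) by (intro prod_zero) auto
    finally show "psi (rp Q) (prod G X) = 0" .
  qed
  hence "prod G X \<in> P" using I by blast
  then obtain Q where "Q \<in> X" "G Q \<in> P" using prime_prod[OF P X(2)] by blast
  thus False using G by blast
qed

lemma psi_surj:
  assumes "x \<noteq> (\<lambda>_. 0)"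
  shows "\<exists>g. psi x g = p"
proof -
  obtain i where xi: "x i \<noteq> 0" using assms by auto
  define g where "g = (\<Sum>k\<le>degree p. Poly_Mapping.single (Poly_Mapping.single i k) (coeff p k / x i ^ k))"
  have "psi x g = (\<Sum>k\<le>degree p. monom (coeff p k) k)"
    unfolding g_def psi_sum by (rule sum.cong) (auto simp: psi_single mono_val_single xi)
  also have "\<dots> = p" by (rule poly_as_sum_of_monoms)
  finally show ?thesis by blast
qed

lemma psi_kernel_prime:
  assumes "x \<noteq> (\<lambda>_. 0)"
  shows "prime_ideal {g. psi (x::'n::finite \<Rightarrow> 'a::field) g = 0}"
  unfolding prime_ideal_def
proof (intro conjI allI impI)
  show "is_ideal {g. psi x g = 0}" by (rule psi_kernel_ideal)
  show "{g. psi x g = 0} \<noteq> UNIV" by (metis (mono_tags) UNIV_I mem_Collect_eq psi_one one_neq_zero)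
  fix a b assume "a * b \<in> {g. psi x g = 0}"
  thus "a \<in> {g. psi x g = 0} \<or> b \<in> {g. psi x g = 0}" by (simp add: psi_mult)
qed

lemma psi_m_prime:
  shows "prime_ideal {g. poly (psi (x::'n::finite \<Rightarrow> 'a::field) g) 0 = 0}"
  unfolding prime_ideal_def is_ideal_def
proof (intro conjI ballI allI impI)
  show "0 \<in> {g. poly (psi x g) 0 = 0}" by simp
  fix a b assume "a \<in> {g. poly (psi x g) 0 = 0}" "b \<in> {g. poly (psi x g) 0 = 0}"
  thus "a + b \<in> {g. poly (psi x g) 0 = 0}" by (simp add: psi_add)
next
  fix a r assume "a \<in> {g. poly (psi x g) 0 = 0}"
  thus "r * a \<in> {g. poly (psi x g) 0 = 0}" by (simp add: psi_mult)
next
  have "(1 :: ('n, 'a) mpoly) \<notin> {g. poly (psi x g) 0 = 0}" by simp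
  thus "{g. poly (psi x g) 0 = 0} \<noteq> UNIV" by blast
next
  fix a b assume "a * b \<in> {g. poly (psi x g) 0 = 0}"
  thus "a \<in> {g. poly (psi x g) 0 = 0} \<or> b \<in> {g. poly (psi x g) 0 = 0}" by (simp add: psi_mult)
qed

lemma no_chain3:
  fixes x :: "'n::finite \<Rightarrow> 'a::field"
  assumes x: "x \<noteq> (\<lambda>_. 0)"
    and P0: "prime_ideal P0" and P1: "prime_ideal P1" and P2: "prime_ideal P2"
    and c1: "P0 \<subset> P1" and c2: "P1 \<subset> P2" and K: "{g. psi x g = 0} \<subseteq> P0"
  shows False
proof -
  have idl: "is_ideal (psi x ` P)" if "prime_ideal P" for P
  proof -
    have I: "is_ideal P" using that by (simp add: prime_ideal_def)
    show ?thesis unfolding is_ideal_def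
    proof (intro conjI ballI allI)
      show "0 \<in> psi x ` P" using ideal_0[OF I] by (metis image_eqI psi_zero)
    next
      fix a b assume "a \<in> psi x ` P" "b \<in> psi x ` P"
      then obtain g h where "g \<in> P" "h \<in> P" "a = psi x g" "b = psi x h" by blast
      thus "a + b \<in> psi x ` P" using ideal_add[OF I] by (metis image_eqI psi_add)
    next
      fix a r assume "a \<in> psi x ` P"
      then obtain g where "g \<in> P" "a = psi x g" by blast
      moreover obtain s where "psi x s = r" using psi_surj[OF x] by blast
      ultimately show "r * a \<in> psi x ` P" using ideal_mult[OF I] by (metis image_eqI psi_mult)
    qed
  qed
  have memb: "psi x g \<in> psi x ` P \<longleftrightarrow> g \<in> P" if "prime_ideal P" "{g. psi x g = 0} \<subseteq> P" for P g
  proof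
    assume "psi x g \<in> psi x ` P"
    then obtain p where p: "p \<in> P" "psi x g = psi x p" by blast
    have I: "is_ideal P" using that by (simp add: prime_ideal_def)
    have "g - p \<in> P" using that(2) p by (auto simp: psi_diff)
    hence "(g - p) + p \<in> P" using ideal_add[OF I _ p(1)] by blast
    thus "g \<in> P" by simp
  qed auto
  have K1: "{g. psi x g = 0} \<subseteq> P1" and K2: "{g. psi x g = 0} \<subseteq> P2" using K c1 c2 by auto
  obtain g2 where g2: "g2 \<in> P2" "g2 \<notin> P1" using c2 by blast
  show False
  proof (rule poly_no_chain[OF idl[OF P1] idl[OF P2], of "psi x g2"])
    show "psi x ` P1 \<subseteq> psi x ` P2" using c2 by blast
    show "1 \<notin> psi x ` P2" using memb[OF P2 K2, of 1] prime_ideal_not_one[OF P2] by simp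
  next
    fix u v assume "u * v \<in> psi x ` P1"
    obtain a where a: "psi x a = u" using psi_surj[OF x] by blast
    obtain b where b: "psi x b = v" using psi_surj[OF x] by blast
    have "a * b \<in> P1" using memb[OF P1 K1, of "a * b"] \<open>u * v \<in> _\<close> a b by (simp add: psi_mult)
    hence "a \<in> P1 \<or> b \<in> P1" using P1 by (simp add: prime_ideal_def)
    thus "u \<in> psi x ` P1 \<or> v \<in> psi x ` P1" using a b by blast
  next
    obtain g where g: "g \<in> P1" "g \<notin> P0" using c1 by blast
    hence "psi x g \<noteq> 0" using K by blast
    thus "\<exists>q\<in>psi x ` P1. q \<noteq> 0" using g by blast
  next
    show "psi x g2 \<in> psi x ` P2" using g2 by blast
    show "psi x g2 \<notin> psi x ` P1" using memb[OF P1 K1] g2 by blast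
  qed
qed

lemma krull_dim_one:
  fixes X :: "('n::finite \<Rightarrow> 'a::field) set set" and J :: "('n, 'a) mpoly set"
  assumes X: "X \<subseteq> proj_space" "finite X" and IJ: "vanishing_ideal X \<subseteq> J"
    and Q: "Q \<in> X" and JQ: "J \<subseteq> {g. psi (rp Q) g = 0}"
  shows "krull_dim J = 1"
proof -
  define K where "K = {k. \<exists>P :: nat \<Rightarrow> ('n, 'a) mpoly set.
      (\<forall>i\<le>k. prime_ideal (P i) \<and> J \<subseteq> P i) \<and> (\<forall>i<k. P i \<subset> P (Suc i))}"
  define x where "x = rp Q"
  have x: "x \<noteq> (\<lambda>_. 0)" using rp(1) Q X(1) by (auto simp: x_def)
  have "1 \<in> K"
  proof -
    define P where "P i = (if i = 0 then {g. psi x g = 0} else {g. poly (psi x g) 0 = 0})" for i :: nat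
    obtain i where xi: "x i \<noteq> 0" using x by auto
    have "psi x (var i) = monom (x i) 1" using psi_homogeneous[OF homogeneous_var] by simp
    hence "var i \<in> P 1" "var i \<notin> P 0" using xi by (auto simp: P_def poly_monom)
    moreover have "P 0 \<subseteq> P 1" by (auto simp: P_def)
    ultimately have "P 0 \<subset> P 1" by blast
    moreover have "prime_ideal (P j) \<and> J \<subseteq> P j" if "j \<le> 1" for j
      using that JQ x psi_kernel_prime[OF x] psi_m_prime[of x] by (auto simp: P_def x_def)
    ultimately show ?thesis unfolding K_def
      by (intro CollectI exI[of _ P]) (auto simp: less_Suc_eq)
  qed
  moreover have "k \<le> 1" if "k \<in> K" for k
  proof (rule ccontr)
    assume "\<not> k \<le> 1"
    obtain P :: "nat \<Rightarrow> ('n, 'a) mpoly set" where P: "\<forall>i\<le>k. prime_ideal (P i) \<and> J \<subseteq> P i" "\<forall>i<k. P i \<subset> P (Suc i)"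
      using \<open>k \<in> K\<close> unfolding K_def by blast
    have pr0: "prime_ideal (P i) \<and> vanishing_ideal X \<subseteq> P i" if "i \<le> 2" for i
    proof -
      have "i \<le> k" using that \<open>\<not> k \<le> 1\<close> by linarith
      thus ?thesis using P(1) IJ by blast
    qed
    have pr: "prime_ideal (P i)" "vanishing_ideal X \<subseteq> P i" if "i \<le> 2" for i
      using pr0[OF that] by auto
    obtain Q' where Q': "Q' \<in> X" "{g. psi (rp Q') g = 0} \<subseteq> P 0"
      using prime_contains_kernel[OF X pr[of 0]] by auto
    have "rp Q' \<noteq> (\<lambda>_. 0)" using rp(1) Q' X(1) by auto
    moreover have "P 0 \<subset> P 1" "P 1 \<subset> P 2" using P(2) \<open>\<not> k \<le> 1\<close> by (auto simp: numeral_2_eq_2)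
    ultimately show False using no_chain3 pr(1)[of 0] pr(1)[of 1] pr(1)[of 2] Q'(2) by simp
  qed
  ultimately have "Sup K = 1" by (intro cSup_eq_maximum) auto
  thus ?thesis by (simp add: krull_dim_def K_def)
qed


lemma rp_inj:
  assumes "P \<in> proj_space" "Q \<in> proj_space" "rp P = rp Q"
  shows "P = Q"
proof -
  have "P = proj_point (rp P)" by (rule rp(2)[OF assms(1)])
  also have "\<dots> = proj_point (rp Q)" using assms(3) by (rule arg_cong)
  also have "\<dots> = Q" by (rule rp(2)[OF assms(2), symmetric])
  finally show ?thesis .
qed

lemma interp_fun:
  fixes X :: "('n::finite \<Rightarrow> 'a::field) set set"
  assumes X: "X \<subseteq> proj_space" "finite X" and D: "D + 1 \<ge> card X"
  defines "H \<equiv> \<lambda>y. (SOME h. homogeneous D h \<and> peval h y = 1 \<and> (\<forall>Q\<in>X. rp Q \<noteq> y \<longrightarrow> peval h (rp Q) = (0::'a)))"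
  assumes P: "P \<in> X"
  shows "homogeneous D (H (rp P)) \<and> peval (H (rp P)) (rp P) = 1 \<and> (\<forall>Q\<in>X. rp Q \<noteq> rp P \<longrightarrow> peval (H (rp P)) (rp Q) = 0)"
proof -
  obtain h where h: "homogeneous D h" "peval h (rp P) = 1" "\<forall>Q\<in>X - {P}. peval h (rp Q) = 0"
    using interpolation[OF X P D] by blast
  have "homogeneous D h \<and> peval h (rp P) = 1 \<and> (\<forall>Q\<in>X. rp Q \<noteq> rp P \<longrightarrow> peval h (rp Q) = 0)"
    using h by auto
  thus ?thesis unfolding H_def by (rule someI)
qed

lemma hilbert_fun_points:
  fixes X :: "('n::finite \<Rightarrow> 'a::field) set set" and J :: "('n, 'a) mpoly set"
  assumes X: "X \<subseteq> proj_space" "finite X" and D: "D + 1 \<ge> card X" and V: "V \<subseteq> X"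
    and J: "J \<inter> S_deg D = {g \<in> S_deg D. \<forall>y\<in>rp ` V. peval g y = 0}"
  shows "hilbert_fun J D = card V"
proof -
  define H where "H \<equiv> \<lambda>y. (SOME h. homogeneous D h \<and> peval h y = 1 \<and> (\<forall>Q\<in>X. rp Q \<noteq> y \<longrightarrow> peval h (rp Q) = (0::'a)))"
  have Hp: "homogeneous D (H (rp P)) \<and> peval (H (rp P)) (rp P) = 1 \<and> (\<forall>Q\<in>X. rp Q \<noteq> rp P \<longrightarrow> peval (H (rp P)) (rp Q) = 0)"
    if "P \<in> X" for P
    unfolding H_def by (rule interp_fun[OF X D that])
  have "hilbert_fun J D = card (rp ` V)"
  proof (rule hilbert_fun_eq[OF _ _ _ J])
    show "finite (rp ` V)" using X(2) V finite_subset by blast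
  next
    fix y assume "y \<in> rp ` V"
    thus "homogeneous D (H y)" using Hp V by blast
  next
    fix y y' assume "y \<in> rp ` V" "y' \<in> rp ` V"
    then obtain P Q where "P \<in> V" "Q \<in> V" "y = rp P" "y' = rp Q" by blast
    thus "peval (H y) y' = (if y' = y then 1 else 0)" using Hp[of P] V by auto
  qed
  also have "card (rp ` V) = card V"
  proof (rule card_image, rule inj_onI)
    fix P Q assume "P \<in> V" "Q \<in> V" "rp P = rp Q"
    thus "P = Q" using V X(1) rp_inj[of P Q] by blast
  qed
  finally show ?thesis .
qed

lemma deg_quot_points:
  fixes X :: "('n::finite \<Rightarrow> 'a::field) set set" and J :: "('n, 'a) mpoly set"
  assumes X: "X \<subseteq> proj_space" "finite X" and V: "V \<subseteq> X" "Q \<in> V"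
    and IJ: "vanishing_ideal X \<subseteq> J" and JQ: "J \<subseteq> {g. psi (rp Q) g = 0}"
    and J: "\<And>D. D \<ge> D0 \<Longrightarrow> J \<inter> S_deg D = {g \<in> S_deg D. \<forall>y\<in>rp ` V. peval g y = 0}"
  shows "deg_quot J = card V"
proof -
  have k: "krull_dim J = 1" using krull_dim_one[OF X IJ _ JQ] V by blast
  have ev: "eventually (\<lambda>D. real (hilbert_fun J D) / real D ^ (1 - 1) = real (card V)) sequentially"
    unfolding eventually_sequentially
  proof (intro exI allI impI)
    fix D assume "max D0 (card X) \<le> D"
    hence "hilbert_fun J D = card V" using hilbert_fun_points[OF X _ V(1) J] by auto
    thus "real (hilbert_fun J D) / real D ^ (1 - 1) = real (card V)" by simp
  qed
  have "lim (\<lambda>D. real (hilbert_fun J D) / real D ^ (1 - 1)) = real (card V)"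
    by (rule limI) (rule tendsto_eventually[OF ev])
  thus ?thesis by (simp add: deg_quot_def k)
qed


lemma I_slice:
  assumes "X \<subseteq> proj_space"
  shows "vanishing_ideal X \<inter> S_deg D = {g \<in> S_deg D. \<forall>y\<in>rp ` X. peval g y = (0::'a::field)}"
  using homog_in_vanishing_ideal[OF assms] by auto

lemma I_kernel:
  assumes "X \<subseteq> proj_space" "Q \<in> X"
  shows "vanishing_ideal X \<subseteq> {g. psi (rp Q) g = (0::'a::field poly)}"
  using assms by (auto simp: vanishing_ideal_char)

lemma deg_quot_I:
  fixes X :: "('n::finite \<Rightarrow> 'a::field) set set"
  assumes X: "X \<subseteq> proj_space" "finite X" and Q: "Q \<in> X"
  shows "deg_quot (vanishing_ideal X) = card X"
  by (rule deg_quot_points[OF X subset_refl Q subset_refl I_kernel[OF X(1) Q] I_slice[OF X(1)]])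

lemma J_kernel:
  fixes X :: "('n::finite \<Rightarrow> 'a::field) set set"
  assumes X: "X \<subseteq> proj_space" and f: "homogeneous d f" and Q: "Q \<in> X" "peval f (rp Q) = 0"
  shows "ideal_gen (insert f (vanishing_ideal X)) \<subseteq> {g. psi (rp Q) g = 0}"
proof (rule ideal_gen_least[OF psi_kernel_ideal])
  have "psi (rp Q) f = 0" using psi_homogeneous[OF f] Q by simp
  thus "insert f (vanishing_ideal X) \<subseteq> {g. psi (rp Q) g = 0}" using I_kernel[OF X Q(1)] by blast
qed

lemma J_slice:
  fixes X :: "('n::finite \<Rightarrow> 'a::field) set set"
  assumes X: "X \<subseteq> proj_space" "finite X" and f: "homogeneous d f" and D: "D \<ge> d + card X"
  defines "V \<equiv> {P \<in> X. peval f (rp P) = 0}"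
  shows "ideal_gen (insert f (vanishing_ideal X)) \<inter> S_deg D = {g \<in> S_deg D. \<forall>y\<in>rp ` V. peval g y = 0}"
proof
  let ?J = "ideal_gen (insert f (vanishing_ideal X))"
  show "?J \<inter> S_deg D \<subseteq> {g \<in> S_deg D. \<forall>y\<in>rp ` V. peval g y = 0}"
  proof safe
    fix g Q assume g: "g \<in> ?J" "g \<in> S_deg D" and Q: "Q \<in> V"
    hence "psi (rp Q) g = 0" using J_kernel[OF X(1) f, of Q] by (auto simp: V_def)
    thus "peval g (rp Q) = 0" using psi_homogeneous[of D g "rp Q"] g(2) by simp
  qed
next
  let ?J = "ideal_gen (insert f (vanishing_ideal X))"
  show "{g \<in> S_deg D. \<forall>y\<in>rp ` V. peval g y = 0} \<subseteq> ?J \<inter> S_deg D"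
  proof safe
    fix g assume g: "g \<in> S_deg D" "\<forall>y\<in>rp ` V. peval g y = 0"
    define E where "E = D - d"
    have E: "E + 1 \<ge> card X" using D by (simp add: E_def)
    have "\<forall>Q\<in>X - V. \<exists>h. homogeneous E h \<and> peval h (rp Q) = 1 \<and> (\<forall>Q'\<in>X - {Q}. peval h (rp Q') = 0)"
      using interpolation[OF X _ E] by blast
    then obtain hh where hh: "\<And>Q. Q \<in> X - V \<Longrightarrow> homogeneous E (hh Q) \<and> peval (hh Q) (rp Q) = 1 \<and> (\<forall>Q'\<in>X - {Q}. peval (hh Q) (rp Q') = 0)"
      by metis
    define h where "h = (\<Sum>Q\<in>X - V. pscale (peval g (rp Q) / peval f (rp Q)) (hh Q))"
    have hE: "homogeneous E h" unfolding h_def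
      by (intro homogeneous_sum pscale_homogeneous) (use hh in blast)
    have hv: "peval h (rp Q) = peval g (rp Q) / peval f (rp Q)" if "Q \<in> X - V" for Q
    proof -
      have "peval h (rp Q) = (\<Sum>Q'\<in>X - V. peval g (rp Q') / peval f (rp Q') * peval (hh Q') (rp Q))"
        by (simp add: h_def peval_sum peval_pscale)
      also have "\<dots> = (\<Sum>Q'\<in>X - V. if Q' = Q then peval g (rp Q') / peval f (rp Q') else 0)"
        by (rule sum.cong) (use hh that in auto)
      also have "\<dots> = peval g (rp Q) / peval f (rp Q)" using that X(2) by simp
      finally show ?thesis .
    qed
    have dE: "d + E = D" using D by (simp add: E_def)
    have hom: "homogeneous D (g - f * h)"
      using homogeneous_mult[OF f hE] g(1) dE by (auto intro: homogeneous_diff)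
    have "g - f * h \<in> vanishing_ideal X"
      unfolding homog_in_vanishing_ideal[OF X(1) hom]
    proof
      fix Q assume Q: "Q \<in> X"
      show "peval (g - f * h) (rp Q) = 0"
      proof (cases "Q \<in> V")
        case True
        thus ?thesis using g(2) by (simp add: peval_diff peval_mult V_def)
      next
        case False
        hence "peval f (rp Q) \<noteq> 0" using Q by (auto simp: V_def)
        thus ?thesis using hv[of Q] Q False by (simp add: peval_diff peval_mult)
      qed
    qed
    hence "g - f * h \<in> ?J" using ideal_gen_sub by blast
    moreover have "f * h \<in> ?J"
      by (rule ideal_mult2[OF ideal_gen_ideal]) (rule subsetD[OF ideal_gen_sub], simp)
    ultimately have "(g - f * h) + f * h \<in> ?J" by (rule ideal_add[OF ideal_gen_ideal])
    thus "g \<in> ?J" by simp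
  qed
qed

lemma deg_quot_J:
  fixes X :: "('n::finite \<Rightarrow> 'a::field) set set"
  assumes X: "X \<subseteq> proj_space" "finite X" and f: "homogeneous d f"
    and Q: "Q \<in> X" "peval f (rp Q) = 0"
  shows "deg_quot (ideal_gen (insert f (vanishing_ideal X))) = card {P \<in> X. peval f (rp P) = 0}"
proof (rule deg_quot_points[OF X _ _ _ J_kernel[OF X(1) f Q] J_slice[OF X f]])
  show "vanishing_ideal X \<subseteq> ideal_gen (insert f (vanishing_ideal X))"
    using ideal_gen_sub by blast
qed (use Q in auto)


lemma vanishing_ideal_ideal: "is_ideal (vanishing_ideal X)"
  unfolding vanishing_ideal_def by (rule ideal_gen_ideal)

lemma F_imp_V:
  fixes X :: "('n::finite \<Rightarrow> 'a::field) set set"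
  assumes X: "X \<subseteq> proj_space" and f: "homogeneous d f" and F: "f \<in> F_set (vanishing_ideal X) d"
  shows "\<exists>Q\<in>X. peval f (rp Q) = 0"
proof (rule ccontr)
  assume nv: "\<not> ?thesis"
  let ?I = "vanishing_ideal X"
  have "?I \<subseteq> colon ?I f" by (auto simp: colon_def intro: ideal_mult2[OF vanishing_ideal_ideal])
  moreover have "colon ?I f \<noteq> ?I" using F by (simp add: F_set_def)
  ultimately obtain g where g: "g * f \<in> ?I" "g \<notin> ?I" by (auto simp: colon_def)
  have "psi (rp Q) g = 0" if "Q \<in> X" for Q
  proof -
    have "psi (rp Q) (g * f) = 0" using g(1) that by (simp add: vanishing_ideal_char[OF X])
    moreover have "psi (rp Q) f \<noteq> 0" using nv that psi_homogeneous[OF f, of "rp Q"] by simp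
    ultimately show ?thesis by (simp add: psi_mult)
  qed
  hence "g \<in> ?I" by (simp add: vanishing_ideal_char[OF X])
  thus False using g by simp
qed

lemma V_imp_F:
  fixes X :: "('n::finite \<Rightarrow> 'a::field) set set"
  assumes X: "X \<subseteq> proj_space" "finite X" and f: "homogeneous d f" and nI: "f \<notin> vanishing_ideal X"
    and P: "P \<in> X" "peval f (rp P) = 0"
  shows "f \<in> F_set (vanishing_ideal X) d"
proof -
  let ?I = "vanishing_ideal X"
  define W where "W = {Q \<in> X. peval f (rp Q) \<noteq> 0}"
  have "\<forall>Q\<in>W. \<exists>l. homogeneous 1 l \<and> peval l (rp Q) = 0 \<and> peval l (rp P) \<noteq> (0::'a)"
  proof
    fix Q assume Q: "Q \<in> W"
    hence "Q \<noteq> P" "Q \<in> X" using P by (auto simp: W_def)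
    thus "\<exists>l. homogeneous 1 l \<and> peval l (rp Q) = 0 \<and> peval l (rp P) \<noteq> (0::'a)"
      using separating_linear_form[of P Q] X P by auto
  qed
  then obtain L where L: "\<And>Q. Q \<in> W \<Longrightarrow> homogeneous 1 (L Q) \<and> peval (L Q) (rp Q) = 0 \<and> peval (L Q) (rp P) \<noteq> (0::'a)"
    by metis
  define g where "g = prod L W"
  have finW: "finite W" using X(2) by (simp add: W_def)
  have gh: "homogeneous (\<Sum>Q\<in>W. 1) g" unfolding g_def by (intro homogeneous_prod) (use L in blast)
  have "peval g (rp P) \<noteq> 0" unfolding g_def peval_prod using L finW by simp
  hence gI: "g \<notin> ?I" using homog_in_vanishing_ideal[OF X(1) gh] P by blast
  have gfh: "homogeneous ((\<Sum>Q\<in>W. 1) + d) (g * f)" by (rule homogeneous_mult[OF gh f])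
  have "g * f \<in> ?I"
    unfolding homog_in_vanishing_ideal[OF X(1) gfh]
  proof
    fix Q assume Q: "Q \<in> X"
    show "peval (g * f) (rp Q) = 0"
    proof (cases "Q \<in> W")
      case True
      have "peval g (rp Q) = 0" unfolding g_def peval_prod
        using L[OF True] True finW by (intro prod_zero) auto
      thus ?thesis by (simp add: peval_mult)
    next
      case False
      thus ?thesis using Q by (simp add: W_def peval_mult)
    qed
  qed
  hence "g \<in> colon ?I f" by (simp add: colon_def)
  hence "colon ?I f \<noteq> ?I" using gI by blast
  thus ?thesis using f nI by (simp add: F_set_def)
qed


theorem theorem4p7:
  fixes X :: "('n::finite \<Rightarrow> 'a::field) set set"
  assumes "X \<subseteq> proj_space" and "finite X" and "card X \<ge> 2"
    and "d \<ge> 1"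
  shows "real (delta_X X d) = delta_I (vanishing_ideal X :: ('n, 'a) mpoly set) d
    \<and> delta_I (vanishing_ideal X :: ('n, 'a) mpoly set) d \<ge> 1"
proof -
  note X = assms(1,2)
  let ?I = "vanishing_ideal X :: ('n, 'a) mpoly set"
  define n where "n = card X"
  define Vc where "Vc f = card {P \<in> X. peval f (rp P) = 0}" for f :: "('n, 'a) mpoly"
  define G where "G = {f \<in> S_deg d. f \<notin> ?I}"
  have VX: "V_X X f = {P \<in> X. peval f (rp P) = 0}" if "f \<in> S_deg d" for f
    using that X(1) vanishes_at_homog[of _ d f] by (auto simp: V_X_def)
  have Xne: "X \<noteq> {}" using assms(3) by auto
  then obtain P0 where P0: "P0 \<in> X" by blast
  have lt: "Vc f < n" if "f \<in> G" for f
  proof -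
    have "\<not> (\<forall>P\<in>X. peval f (rp P) = 0)"
      using that homog_in_vanishing_ideal[OF X(1), of d f] by (auto simp: G_def)
    hence "{P \<in> X. peval f (rp P) = 0} \<subset> X" by blast
    thus ?thesis unfolding Vc_def n_def by (rule psubset_card_mono[OF X(2)])
  qed
  have FG: "F_set ?I d \<subseteq> G" by (auto simp: F_set_def G_def)
  have FV: "f \<in> F_set ?I d \<longleftrightarrow> Vc f \<noteq> 0" if fG: "f \<in> G" for f
  proof -
    have hf: "homogeneous d f" using fG by (simp add: G_def)
    show ?thesis
  proof
    assume "f \<in> F_set ?I d"
    then obtain Q where "Q \<in> X" "peval f (rp Q) = 0" using F_imp_V[OF X(1) hf] by blast
    thus "Vc f \<noteq> 0" using X(2) by (auto simp: Vc_def)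
  next
    assume "Vc f \<noteq> 0"
    hence "{P \<in> X. peval f (rp P) = 0} \<noteq> {}" unfolding Vc_def by (metis card.empty)
    then obtain Q where "Q \<in> X" "peval f (rp Q) = 0" by blast
    thus "f \<in> F_set ?I d" using V_imp_F[OF X hf, of Q] fG by (auto simp: G_def)
  qed
  qed
  have Gne: "G \<noteq> {}"
  proof -
    obtain i where i: "rp P0 i \<noteq> 0" using rp(1)[of P0] P0 X(1) by auto
    have h: "homogeneous (d * 1) (var i ^ d :: ('n, 'a) mpoly)" by (intro homogeneous_power homogeneous_var)
    have "peval (var i ^ d :: ('n, 'a) mpoly) (rp P0) \<noteq> 0" using i by (simp add: peval_power)
    hence "var i ^ d \<notin> ?I" using homog_in_vanishing_ideal[OF X(1) h] P0 by blast
    thus ?thesis using h by (auto simp: G_def)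
  qed
  have dX: "delta_X X d = Min ((\<lambda>f. n - Vc f) ` G)"
  proof -
    have "{card X - card (V_X X f) | f :: ('n, 'a) mpoly. f \<in> S_deg d \<and> f \<notin> ?I}
        = (\<lambda>f. card X - card (V_X X f)) ` G" by (auto simp: G_def)
    also have "\<dots> = (\<lambda>f. n - Vc f) ` G"
      by (rule image_cong[OF refl]) (simp add: VX G_def n_def Vc_def)
    finally show ?thesis unfolding delta_X_def by simp
  qed
  have finA: "finite ((\<lambda>f. n - Vc f) ` G)" by (rule finite_subset[of _ "{..n}"]) auto
  show ?thesis
  proof (cases "F_set ?I d = {}")
    case True
    hence "Vc f = 0" if "f \<in> G" for f using FV[OF that] by blast
    hence "(\<lambda>f. n - Vc f) ` G = {n}" using Gne by auto
    hence "delta_X X d = n" using dX by simp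
    moreover have "delta_I ?I d = n"
      using True deg_quot_I[OF X P0] by (simp add: delta_I_def n_def)
    ultimately show ?thesis using assms(3) by (simp add: n_def)
  next
    case False
    define F where "F = F_set ?I d"
    have finC: "finite (Vc ` F)"
    proof (rule finite_subset[of _ "{..n}"])
      show "Vc ` F \<subseteq> {..n}"
      proof
        fix a assume "a \<in> Vc ` F"
        then obtain f where "f \<in> F" "a = Vc f" by blast
        hence "f \<in> G" using FG by (auto simp: F_def)
        thus "a \<in> {..n}" using lt \<open>a = Vc f\<close> by (simp add: less_imp_le)
      qed
    qed simp
    define m where "m = Max (Vc ` F)"
    have "m \<in> Vc ` F" unfolding m_def using finC False by (simp add: F_def)
    then obtain fs where fs: "fs \<in> F" "m = Vc fs" by blast
    have mn: "m < n" using lt FG fs by (auto simp: F_def)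
    have mge: "Vc f \<le> m" if "f \<in> F" for f unfolding m_def using finC that by simp
    have "delta_X X d = n - m" unfolding dX
    proof (rule Min_eqI[OF finA])
      show "n - m \<in> (\<lambda>f. n - Vc f) ` G" using fs FG by (auto simp: F_def)
    next
      fix a assume "a \<in> (\<lambda>f. n - Vc f) ` G"
      then obtain f where f: "f \<in> G" "a = n - Vc f" by blast
      show "n - m \<le> a"
      proof (cases "Vc f = 0")
        case True thus ?thesis using f by simp
      next
        case False
        hence "f \<in> F" using FV[OF f(1)] by (simp add: F_def)
        thus ?thesis using mge[OF \<open>f \<in> F\<close>] f(2) by (simp add: diff_le_mono2)
      qed
    qed
    moreover have "(\<lambda>f. deg_quot (ideal_gen (insert f ?I))) ` F = real ` (Vc ` F)"
    proof -
      have "deg_quot (ideal_gen (insert f ?I)) = real (Vc f)" if fF: "f \<in> F" for f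
      proof -
        have "f \<in> G" using fF FG by (auto simp: F_def)
        hence hf: "homogeneous d f" by (simp add: G_def)
        have "f \<in> F_set ?I d" using fF by (simp add: F_def)
        then obtain Q where "Q \<in> X" "peval f (rp Q) = 0"
          using F_imp_V[OF X(1) hf] by blast
        thus ?thesis using deg_quot_J[OF X, of d f Q] \<open>f \<in> G\<close> by (simp add: G_def Vc_def)
      qed
      thus ?thesis by (auto simp: image_image)
    qed
    moreover have "Max (real ` (Vc ` F)) = real m"
      unfolding m_def using finC False
      by (intro mono_Max_commute[symmetric]) (auto simp: mono_def F_def)
    ultimately have "delta_I ?I d = real n - real m" "delta_X X d = n - m"
      using False deg_quot_I[OF X P0] by (simp_all add: delta_I_def n_def F_def)
    thus ?thesis using mn by (simp add: of_nat_diff)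
  qed
qed


end
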